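(* Let $E$ be a Hilbert C*-module over a unital C*-algebra $\mathcal{A}$ that satisfies property $[\mathbb{H}]$, let $C\in\mathcal{K}(E)$ and $L=I-C$. Then there exists a uniquely determined non-negative integer $r$ such that $$\{0\}=\mathrm{Ker}(L^0)\subsetneq \mathrm{Ker}(L^1)\subsetneq\cdots\subsetneq \mathrm{Ker}(L^r)=\mathrm{Ker}(L^{r+1})=\cdots$$ and $$E=\mathrm{Ran}(L^0)\supsetneq \mathrm{Ran}(L^1)\supsetneq\cdots\supsetneq \mathrm{Ran}(L^r)=\mathrm{Ran}(L^{r+1})=\cdots;$$ that is, the smallest $m$ with $\mathrm{Ker}(L^m)=\mathrm{Ker}(L^{m+1})$ exists, the smallest $m$ with $\mathrm{Ran}(L^m)=\mathrm{Ran}(L^{m+1})$ exists, both are equal to $r$, and $\mathrm{Ker}(L^n)=\mathrm{Ker}(L^r)$, $\mathrm{Ran}(L^n)=\mathrm{Ran}(L^r)$ for all $n\ge r$.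
   Context: A (right) Hilbert $\mathcal{A}$-module $E$ is a right $\mathcal{A}$-module with an $\mathcal{A}$-valued inner product $\langle\cdot,\cdot\rangle$ (linear in the second variable, $\langle x,ya\rangle=\langle x,y\rangle a$, $\langle y,x\rangle=\langle x,y\rangle^*$, $\langle x,x\rangle\ge 0$ with equality iff $x=0$), complete in the norm $\|x\|=\|\langle x,x\rangle\|^{1/2}$. For $x,y\in E$, $\theta_{x,y}(z)=x\langle y,z\rangle$; $\mathcal{K}(E)$ (the compact operators) is the norm closure in the C*-algebra $\mathcal{L}(E)$ of adjointable operators of the linear span of $\{\theta_{x,y}:x,y\in E\}$. $E$ satisfies property $[\mathbb{H}]$ if for every bounded sequence $(\zeta_n)$ in $E$ there exist a subsequence $(\zeta_{n_k})$ and $\zeta\in E$ such that $\langle v,\zeta_{n_k}\rangle\to\langle v,\zeta\rangle$ for every $v\in E$. $L^0=I$. *)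

theory Defs
  imports Complex_Main
begin

(* A unital C*-algebra is modelled on a type 'a of class real Banach algebra with unit,
   together with an element j (the imaginary unit, central, j*j = -1, giving the complex
   structure with ||(x+iy)a|| = |x+iy| ||a||) and an involution st. *)

definition scC :: "'a::real_normed_algebra_1 \<Rightarrow> complex \<Rightarrow> 'a \<Rightarrow> 'a" where
  "scC j c a = Re c *\<^sub>R a + Im c *\<^sub>R (j * a)"

definition unital_cstar_algebra ::
  "('a::{real_normed_algebra_1,banach} \<Rightarrow> 'a) \<Rightarrow> 'a \<Rightarrow> bool" where
  "unital_cstar_algebra st j \<longleftrightarrow>
     (\<forall>a. j * a = a * j) \<and> j * j = -1 \<and>
     (\<forall>c a. norm (scC j c a) = cmod c * norm a) \<and>
     (\<forall>a b. st (a + b) = st a + st b) \<and>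
     (\<forall>c a. st (scC j c a) = scC j (cnj c) (st a)) \<and>
     (\<forall>a b. st (a * b) = st b * st a) \<and>
     (\<forall>a. st (st a) = a) \<and>
     (\<forall>a. norm (st a * a) = (norm a)\<^sup>2)"

definition cstar_pos :: "('a::{real_normed_algebra_1,banach} \<Rightarrow> 'a) \<Rightarrow> 'a \<Rightarrow> bool" where
  "cstar_pos st a \<longleftrightarrow> (\<exists>b. a = st b * b)"

definition hilbert_module ::
  "('a::{real_normed_algebra_1,banach} \<Rightarrow> 'a) \<Rightarrow> 'a \<Rightarrow>
   ('e::banach \<Rightarrow> 'a \<Rightarrow> 'e) \<Rightarrow> ('e \<Rightarrow> 'e \<Rightarrow> 'a) \<Rightarrow> bool" where
  "hilbert_module st j act ip \<longleftrightarrow>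
     unital_cstar_algebra st j \<and>
     (\<forall>x a b. act x (a + b) = act x a + act x b) \<and>
     (\<forall>x y a. act (x + y) a = act x a + act y a) \<and>
     (\<forall>x a b. act x (a * b) = act (act x a) b) \<and>
     (\<forall>x (r::real). r *\<^sub>R x = act x (of_real r)) \<and>
     (\<forall>x y z. ip x (y + z) = ip x y + ip x z) \<and>
     (\<forall>x y a. ip x (act y a) = ip x y * a) \<and>
     (\<forall>x y. ip y x = st (ip x y)) \<and>
     (\<forall>x. cstar_pos st (ip x x)) \<and>
     (\<forall>x. ip x x = 0 \<longrightarrow> x = 0) \<and>
     (\<forall>x. norm x = sqrt (norm (ip x x)))"

definition theta :: "('e \<Rightarrow> 'a \<Rightarrow> 'e) \<Rightarrow> ('e \<Rightarrow> 'e \<Rightarrow> 'a) \<Rightarrow> 'e \<Rightarrow> 'e \<Rightarrow> 'e \<Rightarrow> 'e" where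
  "theta act ip x y z = act x (ip y z)"

definition adjointable :: "('e \<Rightarrow> 'e \<Rightarrow> 'a) \<Rightarrow> ('e \<Rightarrow> 'e) \<Rightarrow> bool" where
  "adjointable ip T \<longleftrightarrow> (\<exists>S. \<forall>x y. ip (T x) y = ip x (S y))"

(* K(E): operator-norm closure (inside L(E)) of the linear span of the theta_{x,y}.
   An element of the span is sum_{i<n} c_i theta_{x_i,y_i}, complex scalars acting on E
   via z \<mapsto> z (c 1). *)
definition compact_op ::
  "'a \<Rightarrow> ('e::real_normed_vector \<Rightarrow> 'a::{real_normed_algebra_1,banach} \<Rightarrow> 'e) \<Rightarrow>
   ('e \<Rightarrow> 'e \<Rightarrow> 'a) \<Rightarrow> ('e \<Rightarrow> 'e) \<Rightarrow> bool" where
  "compact_op j act ip C \<longleftrightarrow> adjointable ip C \<and>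
     (\<forall>\<epsilon>>0. \<exists>n (c::nat \<Rightarrow> complex) (xs::nat \<Rightarrow> 'e) ys.
        \<forall>z. norm (C z - (\<Sum>i<n. act (theta act ip (xs i) (ys i) z) (scC j (c i) 1))) \<le> \<epsilon> * norm z)"

definition property_H :: "('e::real_normed_vector \<Rightarrow> 'e \<Rightarrow> 'a::real_normed_vector) \<Rightarrow> bool" where
  "property_H ip \<longleftrightarrow>
     (\<forall>\<zeta>::nat \<Rightarrow> 'e. (\<exists>B. \<forall>n. norm (\<zeta> n) \<le> B) \<longrightarrow>
        (\<exists>h \<zeta>0. strict_mono h \<and> (\<forall>v. (\<lambda>k. ip v (\<zeta> (h k))) \<longlonglongrightarrow> ip v \<zeta>0)))"

definition Ker :: "('e \<Rightarrow> 'e::zero) \<Rightarrow> 'e set" where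
  "Ker T = {x. T x = 0}"

definition Ran :: "('e \<Rightarrow> 'e) \<Rightarrow> 'e set" where
  "Ran T = range T"

end

theory Submission
  imports Defs "HOL-Analysis.Elementary_Normed_Spaces"
begin


definition cpt :: "('e::real_normed_vector \<Rightarrow> 'e) \<Rightarrow> bool" where
  "cpt C \<longleftrightarrow> (\<forall>(x::nat \<Rightarrow> 'e) B. (\<forall>n. norm (x n) \<le> B) \<longrightarrow> (\<exists>h. strict_mono h \<and> Cauchy (\<lambda>n. C (x (h n)))))"

lemma infdist_lessE:
  assumes "A \<noteq> {}" "infdist x A < e"
  shows "\<exists>a\<in>A. dist x a < e"
proof -
  have "(INF a\<in>A. dist x a) < e" using assms infdist_notempty by metis
  then show ?thesis using assms(1) by (simp add: cInf_less_iff)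
qed

lemma normalize_away:
  fixes x :: "'e::real_normed_vector"
  assumes K: "subspace K" and d: "infdist x K > 0"
  shows "\<exists>z\<in>K. infdist x K \<le> norm (x - z) \<and> norm (x - z) < 2 * infdist x K \<and>
     (\<forall>k\<in>K. norm ((1 / norm (x - z)) *\<^sub>R (x - z) - k) > 1/2)"
proof -
  have ne: "K \<noteq> {}" using K subspace_0 by blast
  have "infdist x K < 2 * infdist x K" using d by simp
  then obtain z where z: "z \<in> K" "dist x z < 2 * infdist x K" using infdist_lessE[OF ne] by blast
  have ge: "infdist x K \<le> norm (x - z)" using infdist_le[OF z(1), of x] by (simp add: dist_norm)
  have np: "norm (x - z) > 0" using ge d by linarith
  have "norm ((1 / norm (x - z)) *\<^sub>R (x - z) - k) > 1/2" if k: "k \<in> K" for k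
  proof -
    have zk: "z + norm (x - z) *\<^sub>R k \<in> K" using K z(1) k
      by (simp add: subspace_add subspace_scale)
    have "infdist x K \<le> norm (x - (z + norm (x - z) *\<^sub>R k))"
      using infdist_le[OF zk, of x] by (simp add: dist_norm)
    also have "x - (z + norm (x - z) *\<^sub>R k) = norm (x - z) *\<^sub>R ((1 / norm (x - z)) *\<^sub>R (x - z) - k)"
      using np by (simp add: algebra_simps)
    also have "norm \<dots> = norm (x - z) * norm ((1 / norm (x - z)) *\<^sub>R (x - z) - k)"
      using np by simp
    finally have "infdist x K \<le> norm (x - z) * norm ((1 / norm (x - z)) *\<^sub>R (x - z) - k)" .
    moreover have "norm (x - z) < 2 * infdist x K" using z(2) by (simp add: dist_norm)
    ultimately show ?thesis using np
    proof -
      fix a n t :: real assume "a \<le> n * t" "n < 2 * a" "0 < n"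
      show "1/2 < t"
      proof (rule ccontr)
        assume "\<not> 1/2 < t"
        then have "n * t \<le> n * (1/2)" using \<open>0 < n\<close> by (intro mult_left_mono) auto
        then show False using \<open>a \<le> n * t\<close> \<open>n < 2 * a\<close> by linarith
      qed
    qed
  qed
  then show ?thesis using z ge by (auto simp: dist_norm)
qed

lemma funpow_linear: fixes L :: "'a::real_vector \<Rightarrow> 'a" shows "linear L \<Longrightarrow> linear (L ^^ n)"
proof (induction n)
  case 0 show ?case by (simp add: linear_iff funpow_0)
next
  case (Suc n)
  have "linear (L \<circ> L ^^ n)" by (rule linear_compose[OF Suc.IH[OF Suc.prems] Suc.prems])
  then show ?case by (simp add: o_def)
qed

lemma Ker_subspace: "linear T \<Longrightarrow> subspace (Ker T)"
  unfolding subspace_def Ker_def by (auto simp: linear_add linear_scale linear_0)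

lemma Ran_subspace: "linear T \<Longrightarrow> subspace (Ran T)"
  unfolding subspace_def Ran_def
proof (intro conjI ballI allI)
  assume lin: "linear T"
  show "0 \<in> range T" using linear_0[OF lin] by (metis rangeI)
  fix x y assume "x \<in> range T" "y \<in> range T"
  then obtain a b where "x = T a" "y = T b" by auto
  then show "x + y \<in> range T" using linear_add[OF lin, of a b] by (metis rangeI)
next
  fix c x assume lin: "linear T" and "x \<in> range T"
  then obtain a where "x = T a" by auto
  then show "c *\<^sub>R x \<in> range T" using linear_scale[OF lin, of c a] by (metis rangeI)
qed

lemma range_funpow_add: "range (f ^^ (k + j)) = (f ^^ k) ` range (f ^^ j)"
  by (simp add: funpow_add image_comp)

lemma Ker_mono:
  assumes "linear L" "a \<le> b" shows "Ker (L ^^ a) \<subseteq> Ker (L ^^ b)"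
proof
  fix x assume "x \<in> Ker (L ^^ a)"
  then have "(L ^^ a) x = 0" by (simp add: Ker_def)
  moreover have "(L ^^ b) x = (L ^^ (b - a)) ((L ^^ a) x)"
  proof -
    have "b = (b - a) + a" using assms(2) by simp
    then have "L ^^ b = L ^^ ((b - a) + a)" by simp
    then show ?thesis by (simp add: funpow_add)
  qed
  ultimately show "x \<in> Ker (L ^^ b)"
    using linear_0[OF funpow_linear[OF assms(1)]] by (simp add: Ker_def)
qed

lemma Ran_mono:
  assumes "a \<le> b" shows "Ran (L ^^ b) \<subseteq> Ran (L ^^ a)"
proof -
  have "Ran (L ^^ b) = (L ^^ a) ` range (L ^^ (b - a))"
    unfolding Ran_def using range_funpow_add[where f=L and k=a and j="b - a"] assms by simp
  then show ?thesis unfolding Ran_def by auto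
qed

lemma Ker_stab:
  assumes lin: "linear L" and eq: "Ker (L ^^ m) = Ker (L ^^ Suc m)" and "m \<le> n"
  shows "Ker (L ^^ n) = Ker (L ^^ m)"
  using \<open>m \<le> n\<close>
proof (induction n rule: dec_induct)
  case base then show ?case by simp
next
  case (step k)
  have "Ker (L ^^ Suc k) \<subseteq> Ker (L ^^ k)"
  proof
    fix x assume "x \<in> Ker (L ^^ Suc k)"
    then have "(L ^^ Suc k) x = 0" by (simp add: Ker_def)
    moreover have "(L ^^ Suc k) x = (L ^^ Suc m) ((L ^^ (k - m)) x)"
    proof -
      have "L ^^ Suc k = L ^^ (Suc m + (k - m))" using step(1) by simp
      then show ?thesis by (simp only: funpow_add o_apply)
    qed
    ultimately have "(L ^^ (k - m)) x \<in> Ker (L ^^ m)" using eq by (simp add: Ker_def)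
    then have "(L ^^ m) ((L ^^ (k - m)) x) = 0" by (simp add: Ker_def)
    moreover have "(L ^^ k) x = (L ^^ m) ((L ^^ (k - m)) x)"
    proof -
      have "L ^^ k = L ^^ (m + (k - m))" using step(1) by simp
      then show ?thesis by (simp only: funpow_add o_apply)
    qed
    ultimately show "x \<in> Ker (L ^^ k)" by (simp add: Ker_def)
  qed
  moreover have "Ker (L ^^ k) \<subseteq> Ker (L ^^ Suc k)" using Ker_mono[OF lin, of k "Suc k"] by simp
  ultimately show ?case using step.IH by blast
qed

lemma Ran_stab:
  assumes eq: "Ran (L ^^ m) = Ran (L ^^ Suc m)" and "m \<le> n"
  shows "Ran (L ^^ n) = Ran (L ^^ m)"
proof -
  have "Ran (L ^^ n) = (L ^^ (n - m)) ` Ran (L ^^ m)"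
    unfolding Ran_def using range_funpow_add[where f=L and k="n - m" and j=m] assms(2) by simp
  also have "\<dots> = (L ^^ (n - m)) ` Ran (L ^^ Suc m)" using eq by simp
  also have "\<dots> = Ran (L ^^ (n - m + Suc m))"
    unfolding Ran_def using range_funpow_add[where f=L and k="n - m" and j="Suc m"] by simp
  also have "n - m + Suc m = Suc n" using assms(2) by simp
  finally have 1: "Ran (L ^^ n) = Ran (L ^^ Suc n)" .
  show ?thesis using \<open>m \<le> n\<close>
  proof (induction n rule: dec_induct)
    case base then show ?case by simp
  next
    case (step k)
    have "Ran (L ^^ k) = (L ^^ (k - m)) ` Ran (L ^^ m)"
      unfolding Ran_def using range_funpow_add[where f=L and k="k - m" and j=m] step(1) by simp
    also have "\<dots> = (L ^^ (k - m)) ` Ran (L ^^ Suc m)" using eq by simp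
    also have "\<dots> = Ran (L ^^ (k - m + Suc m))"
      unfolding Ran_def using range_funpow_add[where f=L and k="k - m" and j="Suc m"] by simp
    also have "k - m + Suc m = Suc k" using step(1) by simp
    finally show ?case using step by simp
  qed
qed

lemma sep_contra:
  fixes C :: "'e::real_normed_vector \<Rightarrow> 'e"
  fixes x :: "nat \<Rightarrow> 'e"
  assumes cpt: "cpt C" and n1: "\<And>n. norm (x n) = 1"
    and sep: "\<And>m n. m < n \<Longrightarrow> norm (C (x m) - C (x n)) \<ge> 1/2"
  shows False
proof -
  have "\<forall>n. norm (x n) \<le> 1" using n1 by simp
  then obtain h where h: "strict_mono h" "Cauchy (\<lambda>n. C (x (h n)))"
    using cpt unfolding cpt_def by blast
  obtain M where M: "\<forall>m\<ge>M. \<forall>n\<ge>M. norm (C (x (h m)) - C (x (h n))) < 1/2"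
    using CauchyD[OF h(2), of "1/2"] by auto
  have "h M < h (Suc M)" using h(1) by (simp add: strict_monoD)
  then have "norm (C (x (h M)) - C (x (h (Suc M)))) \<ge> 1/2" by (rule sep)
  moreover have "norm (C (x (h M)) - C (x (h (Suc M)))) < 1/2" using M by auto
  ultimately show False by simp
qed

lemma cpt_bounded:
  fixes C :: "'e::real_normed_vector \<Rightarrow> 'e"
  assumes lin: "linear C" and cpt: "cpt C"
  shows "bounded_linear C"
proof -
  have "\<exists>K. \<forall>x. norm (C x) \<le> norm x * K"
  proof (rule ccontr)
    assume "\<not> (\<exists>K. \<forall>x. norm (C x) \<le> norm x * K)"
    then have "\<forall>n::nat. \<exists>x. norm (C x) > norm x * real n" by (meson not_le)
    then obtain x where x: "\<And>n. norm (C (x n)) > norm (x n) * real n" by metis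
    have xnz: "x n \<noteq> 0" for n
      using x[of n] linear_0[OF lin] by auto
    define y where "y n = (1 / norm (x n)) *\<^sub>R x n" for n
    have y1: "norm (y n) = 1" for n using xnz[of n] by (simp add: y_def)
    have Cy: "norm (C (y n)) > real n" for n
    proof -
      have "norm (C (y n)) = norm (C (x n)) / norm (x n)"
        using xnz[of n] by (simp add: y_def linear_scale[OF lin])
      also have "\<dots> > real n" using x[of n] xnz[of n]
        by (simp add: pos_less_divide_eq mult.commute)
      finally show ?thesis .
    qed
    have "\<forall>n. norm (y n) \<le> 1" using y1 by simp
    then obtain h where h: "strict_mono h" "Cauchy (\<lambda>n. C (y (h n)))"
      using cpt unfolding cpt_def by blast
    obtain K where K: "\<forall>n. norm (C (y (h n))) \<le> K" using Cauchy_Bseq[OF h(2)] by (auto elim: BseqE)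
    obtain n :: nat where n: "K < real n" using reals_Archimedean2 by blast
    have "real n \<le> real (h n)" using seq_suble[OF h(1)] by simp
    then show False using Cy[of "h n"] K[rule_format, of n] n by linarith
  qed
  then obtain K where K: "\<And>x. norm (C x) \<le> norm x * K" by blast
  show ?thesis by (rule bounded_linear_intro[OF linear_add[OF lin] linear_scale[OF lin] K])
qed

lemma closed_image_L:
  fixes C :: "'e::banach \<Rightarrow> 'e"
  assumes bl: "bounded_linear C" and cpt: "cpt C" and Mcl: "closed M" and Msub: "subspace M"
  shows "closed ((\<lambda>z. z - C z) ` M)"
proof -
  define L where "L = (\<lambda>z. z - C z)"
  have blL: "bounded_linear L" unfolding L_def by (intro bounded_linear_sub bounded_linear_ident bl)
  have linL: "linear L" using blL bounded_linear.linear by blast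
  have LC: "w = L w + C w" for w unfolding L_def by simp
  have contL: "continuous_on UNIV L"
    using bounded_linear.continuous_on[OF blL continuous_on_id] by simp
  define K where "K = {x\<in>M. L x = 0}"
  have KM: "K \<subseteq> M" unfolding K_def by auto
  have Ksub: "subspace K" using Msub unfolding K_def subspace_def
    by (auto simp: linear_add[OF linL] linear_scale[OF linL] linear_0[OF linL])
  have Kcl: "closed K"
  proof -
    have "K = M \<inter> {x. L x = 0}" unfolding K_def by auto
    moreover have "closed {x. L x = 0}" by (rule closed_Collect_eq[OF contL continuous_on_const])
    ultimately show ?thesis using Mcl by auto
  qed
  have "\<exists>g>0. \<forall>x\<in>M. infdist x K \<le> g * norm (L x)"
  proof (rule ccontr)
    assume "\<not> (\<exists>g>0. \<forall>x\<in>M. infdist x K \<le> g * norm (L x))"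
    note nE = this
    have "\<forall>n::nat. \<exists>x. x \<in> M \<and> infdist x K > real (Suc n) * norm (L x)"
    proof
      fix n :: nat
      have "real (Suc n) > 0" by simp
      then have "\<not> (\<forall>x\<in>M. infdist x K \<le> real (Suc n) * norm (L x))" using nE by blast
      then show "\<exists>x. x \<in> M \<and> infdist x K > real (Suc n) * norm (L x)" by (auto simp: not_le)
    qed
    then obtain x where x0: "\<forall>n. x n \<in> M \<and> infdist (x n) K > real (Suc n) * norm (L (x n))"
      using choice[of "\<lambda>n x. x \<in> M \<and> infdist x K > real (Suc n) * norm (L x)"] by blast
    then have x: "\<And>n. x n \<in> M" "\<And>n. infdist (x n) K > real (Suc n) * norm (L (x n))" by auto
    have dpos: "infdist (x n) K > 0" for n
    proof -
      have "0 \<le> real (Suc n) * norm (L (x n))" by simp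
      then show ?thesis using x(2)[of n] by linarith
    qed
    have "\<forall>n. \<exists>z. z \<in> K \<and> infdist (x n) K \<le> norm (x n - z) \<and>
       (\<forall>k\<in>K. norm ((1 / norm (x n - z)) *\<^sub>R (x n - z) - k) > 1/2)"
      using normalize_away[OF Ksub dpos] by blast
    then obtain z where z0: "\<forall>n. z n \<in> K \<and> infdist (x n) K \<le> norm (x n - z n) \<and>
       (\<forall>k\<in>K. norm ((1 / norm (x n - z n)) *\<^sub>R (x n - z n) - k) > 1/2)"
      using choice[of "\<lambda>n z. z \<in> K \<and> infdist (x n) K \<le> norm (x n - z) \<and>
       (\<forall>k\<in>K. norm ((1 / norm (x n - z)) *\<^sub>R (x n - z) - k) > 1/2)"] by blast
    then have z: "\<And>n. z n \<in> K" "\<And>n. infdist (x n) K \<le> norm (x n - z n)"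
      "\<And>n k. k \<in> K \<Longrightarrow> norm ((1 / norm (x n - z n)) *\<^sub>R (x n - z n) - k) > 1/2"
      by auto
    define w where "w n = (1 / norm (x n - z n)) *\<^sub>R (x n - z n)" for n
    have npos: "norm (x n - z n) > 0" for n using z(2)[of n] dpos[of n] by linarith
    have w1: "norm (w n) = 1" for n using npos[of n] by (simp add: w_def)
    have wM: "w n \<in> M" for n
      using x(1)[of n] z(1)[of n] KM Msub unfolding w_def by (auto intro: subspace_scale subspace_diff)
    have wK: "norm (w n - k) > 1/2" if "k \<in> K" for n k using z(3) that unfolding w_def by blast
    have Lw: "norm (L (w n)) \<le> inverse (real (Suc n))" for n
    proof -
      have Lz: "L (z n) = 0" using z(1)[of n] unfolding K_def by auto
      have "L (w n) = (1 / norm (x n - z n)) *\<^sub>R L (x n)"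
        unfolding w_def using Lz by (simp add: linear_scale[OF linL] linear_diff[OF linL])
      then have "norm (L (w n)) = norm (L (x n)) / norm (x n - z n)" by simp
      also have "\<dots> \<le> norm (L (x n)) / infdist (x n) K"
        using z(2)[of n] dpos[of n] npos[of n] by (intro divide_left_mono) auto
      also have "\<dots> \<le> inverse (real (Suc n))"
        using x(2)[of n] dpos[of n] by (simp add: divide_simps mult.commute)
      finally show ?thesis .
    qed
    have "\<forall>n. norm (w n) \<le> 1" using w1 by simp
    then obtain h where h: "strict_mono h" "Cauchy (\<lambda>n. C (w (h n)))"
      using cpt unfolding cpt_def by blast
    then obtain c where c: "(\<lambda>n. C (w (h n))) \<longlonglongrightarrow> c"
      using Cauchy_convergent_iff convergentD by blast
    have L0: "(\<lambda>n. L (w (h n))) \<longlonglongrightarrow> 0"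
    proof (rule Lim_null_comparison[OF _ LIMSEQ_inverse_real_of_nat])
      show "\<forall>\<^sub>F n in sequentially. norm (L (w (h n))) \<le> inverse (real (Suc n))"
      proof (intro always_eventually allI)
        fix n
        have "n \<le> h n" using seq_suble[OF h(1)] by simp
        then have "inverse (real (Suc (h n))) \<le> inverse (real (Suc n))"
          by (intro le_imp_inverse_le) auto
        then show "norm (L (w (h n))) \<le> inverse (real (Suc n))" using Lw[of "h n"] by linarith
      qed
    qed
    have wc: "(\<lambda>n. w (h n)) \<longlonglongrightarrow> c"
    proof -
      have "(\<lambda>n. L (w (h n)) + C (w (h n))) \<longlonglongrightarrow> 0 + c" by (intro tendsto_add L0 c)
      moreover have "(\<lambda>n. L (w (h n)) + C (w (h n))) = (\<lambda>n. w (h n))" unfolding L_def by simp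
      ultimately show ?thesis by simp
    qed
    have cM: "c \<in> M" using closed_sequentially[OF Mcl _ wc] wM by blast
    have "(\<lambda>n. L (w (h n))) \<longlonglongrightarrow> L c" using bounded_linear.tendsto[OF blL wc] .
    then have "L c = 0" using L0 LIMSEQ_unique by blast
    then have cK: "c \<in> K" using cM unfolding K_def by auto
    obtain N where N: "\<forall>n\<ge>N. norm (w (h n) - c) < 1/2" using LIMSEQ_D[OF wc, of "1/2"] by auto
    then show False using wK[OF cK, of "h N"] by auto
  qed
  then obtain g where g: "g > 0" "\<And>x. x \<in> M \<Longrightarrow> infdist x K \<le> g * norm (L x)" by blast
  have "l \<in> L ` M" if y: "\<And>n. y n \<in> L ` M" and yl: "y \<longlonglongrightarrow> l" for y l
  proof -
    have "\<forall>n. \<exists>x. x \<in> M \<and> y n = L x" using y by blast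
    then obtain x where x0: "\<forall>n. x n \<in> M \<and> y n = L (x n)"
      using choice[of "\<lambda>n x. x \<in> M \<and> y n = L x"] by blast
    then have x: "\<And>n. x n \<in> M" "\<And>n. y n = L (x n)" by auto
    have Kne: "K \<noteq> {}" using Ksub subspace_0 by blast
    have "\<forall>n. \<exists>z. z \<in> K \<and> dist (x n) z < infdist (x n) K + 1"
    proof
      fix n show "\<exists>z. z \<in> K \<and> dist (x n) z < infdist (x n) K + 1"
        using infdist_lessE[OF Kne, of "x n" "infdist (x n) K + 1"] by auto
    qed
    then obtain z where z0: "\<forall>n. z n \<in> K \<and> dist (x n) (z n) < infdist (x n) K + 1"
      using choice[of "\<lambda>n z. z \<in> K \<and> dist (x n) z < infdist (x n) K + 1"] by blast
    then have z: "\<And>n. z n \<in> K" "\<And>n. dist (x n) (z n) < infdist (x n) K + 1" by auto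
    define x' where "x' n = x n - z n" for n
    have x'M: "x' n \<in> M" for n using x(1) z(1) KM Msub unfolding x'_def by (auto intro: subspace_diff)
    have Lx': "L (x' n) = y n" for n
      using z(1)[of n] x(2)[of n] unfolding x'_def K_def by (auto simp: linear_diff[OF linL])
    have "Bseq y" using convergent_imp_Bseq[of y] yl by (auto simp: convergent_def)
    then obtain Y where Y0: "\<forall>n. norm (y n) \<le> Y" using BseqE by blast
    then have Y: "\<And>n. norm (y n) \<le> Y" by blast
    have bx: "norm (x' n) \<le> g * Y + 1" for n
    proof -
      have "norm (x' n) < infdist (x n) K + 1" using z(2)[of n] by (simp add: x'_def dist_norm)
      also have "infdist (x n) K \<le> g * norm (y n)" using g(2)[OF x(1)[of n]] x(2)[of n] by simp
      also have "g * norm (y n) \<le> g * Y" using Y[of n] g(1) by simp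
      finally show ?thesis by simp
    qed
    then obtain h where h: "strict_mono h" "Cauchy (\<lambda>n. C (x' (h n)))"
      using cpt unfolding cpt_def by blast
    then obtain c where c: "(\<lambda>n. C (x' (h n))) \<longlonglongrightarrow> c"
      using Cauchy_convergent_iff convergentD by blast
    have yh: "(\<lambda>n. y (h n)) \<longlonglongrightarrow> l" using LIMSEQ_subseq_LIMSEQ[OF yl h(1)] by (simp add: o_def)
    have xc: "(\<lambda>n. x' (h n)) \<longlonglongrightarrow> l + c"
    proof -
      have "(\<lambda>n. L (x' (h n)) + C (x' (h n))) \<longlonglongrightarrow> l + c"
        unfolding Lx' by (intro tendsto_add yh c)
      moreover have "(\<lambda>n. L (x' (h n)) + C (x' (h n))) = (\<lambda>n. x' (h n))" unfolding L_def by simp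
      ultimately show ?thesis by simp
    qed
    have uM: "l + c \<in> M" using closed_sequentially[OF Mcl _ xc] x'M by blast
    have "(\<lambda>n. L (x' (h n))) \<longlonglongrightarrow> L (l + c)" using bounded_linear.tendsto[OF blL xc] .
    then have "L (l + c) = l" using yh LIMSEQ_unique unfolding Lx' by blast
    then show ?thesis by (rule image_eqI[OF sym uM])
  qed
  then show ?thesis unfolding closed_sequential_limits L_def[symmetric] by blast
qed

lemma riesz:
  fixes M K :: "'e::real_normed_vector set"
  assumes "subspace K" "closed K" "subspace M" "K \<subseteq> M" "K \<noteq> M"
  shows "\<exists>x\<in>M. norm x = 1 \<and> (\<forall>k\<in>K. norm (x - k) > 1/2)"
proof -
  obtain y where y: "y \<in> M" "y \<notin> K" using assms(4,5) by blast
  have "K \<noteq> {}" using assms(1) subspace_0 by blast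
  then have "infdist y K > 0" using infdist_pos_not_in_closed assms(2) y(2) by blast
  from normalize_away[OF assms(1) this] obtain z where z: "z \<in> K" "infdist y K \<le> norm (y - z)"
    "\<forall>k\<in>K. norm ((1 / norm (y - z)) *\<^sub>R (y - z) - k) > 1/2" by blast
  have np: "norm (y - z) > 0" using z(2) \<open>infdist y K > 0\<close> by linarith
  have "(1 / norm (y - z)) *\<^sub>R (y - z) \<in> M"
    using y(1) z(1) assms(3,4) by (auto intro: subspace_scale subspace_diff)
  moreover have "norm ((1 / norm (y - z)) *\<^sub>R (y - z)) = 1" using np by simp
  ultimately show ?thesis using z(3) by blast
qed

lemma funpow_bounded_linear:
  fixes L :: "'a::real_normed_vector \<Rightarrow> 'a"
  shows "bounded_linear L \<Longrightarrow> bounded_linear (L ^^ n)"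
proof (induction n)
  case 0
  show ?case by (simp add: id_def)
next
  case (Suc n)
  have "bounded_linear (\<lambda>x. L ((L ^^ n) x))"
    by (rule bounded_linear_compose[OF Suc.prems Suc.IH[OF Suc.prems]])
  then show ?case by (simp add: o_def)
qed

lemma ascent:
  fixes C :: "'e::banach \<Rightarrow> 'e"
  assumes lin: "linear C" and cpt: "cpt C" and Ldef: "L = (\<lambda>z. z - C z)"
  shows "\<exists>m. Ker (L ^^ m) = Ker (L ^^ Suc m)"
proof (rule ccontr)
  assume ne: "\<not> (\<exists>m. Ker (L ^^ m) = Ker (L ^^ Suc m))"
  have bl: "bounded_linear C" by (rule cpt_bounded[OF lin cpt])
  have blL: "bounded_linear L" unfolding Ldef by (intro bounded_linear_sub bounded_linear_ident bl)
  have linL: "linear L" using blL bounded_linear.linear by blast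
  have LC: "C w = w - L w" for w unfolding Ldef by simp
  have sub: "subspace (Ker (L ^^ m))" for m by (rule Ker_subspace[OF funpow_linear[OF linL]])
  have cl: "closed (Ker (L ^^ m))" for m
  proof -
    have "continuous_on UNIV (L ^^ m)"
      using bounded_linear.continuous_on[OF funpow_bounded_linear[OF blL] continuous_on_id] by simp
    then show ?thesis unfolding Ker_def by (rule closed_Collect_eq[OF _ continuous_on_const])
  qed
  have "\<forall>m. \<exists>x\<in>Ker (L ^^ Suc m). norm x = 1 \<and> (\<forall>k\<in>Ker (L ^^ m). norm (x - k) > 1/2)"
  proof
    fix m show "\<exists>x\<in>Ker (L ^^ Suc m). norm x = 1 \<and> (\<forall>k\<in>Ker (L ^^ m). norm (x - k) > 1/2)"
      using riesz[OF sub cl sub Ker_mono[OF linL, of m "Suc m"]] ne by auto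
  qed
  then obtain x where x: "\<And>m. x m \<in> Ker (L ^^ Suc m)" "\<And>m. norm (x m) = 1"
    "\<And>m k. k \<in> Ker (L ^^ m) \<Longrightarrow> norm (x m - k) > 1/2" by metis
  have "norm (C (x a) - C (x b)) \<ge> 1/2" if ab: "a < b" for a b
  proof -
    define k where "k = L (x b) + x a - L (x a)"
    have Lpow: "(L ^^ n) (L y) = (L ^^ Suc n) y" for n y by (simp add: funpow_swap1)
    have 1: "L (x b) \<in> Ker (L ^^ b)" using x(1)[of b] by (simp add: Ker_def Lpow)
    have 2: "x a \<in> Ker (L ^^ b)" using x(1)[of a] Ker_mono[OF linL, of "Suc a" b] ab by auto
    have "L (x a) \<in> Ker (L ^^ a)" using x(1)[of a] by (simp add: Ker_def Lpow)
    then have 3: "L (x a) \<in> Ker (L ^^ b)" using Ker_mono[OF linL, of a b] ab by auto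
    have kK: "k \<in> Ker (L ^^ b)" unfolding k_def using 1 2 3 sub[of b]
      by (intro subspace_diff subspace_add) auto
    have "C (x a) - C (x b) = - (x b - k)" unfolding LC k_def by (simp add: algebra_simps)
    then have "norm (C (x a) - C (x b)) = norm (x b - k)" by (simp add: norm_minus_commute)
    then show ?thesis using x(3)[OF kK] by simp
  qed
  then show False using sep_contra[OF cpt x(2)] by blast
qed

lemma descent:
  fixes C :: "'e::banach \<Rightarrow> 'e"
  assumes lin: "linear C" and cpt: "cpt C" and Ldef: "L = (\<lambda>z. z - C z)"
  shows "\<exists>m. Ran (L ^^ Suc m) = Ran (L ^^ m)"
proof (rule ccontr)
  assume ne: "\<not> (\<exists>m. Ran (L ^^ Suc m) = Ran (L ^^ m))"
  have bl: "bounded_linear C" by (rule cpt_bounded[OF lin cpt])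
  have blL: "bounded_linear L" unfolding Ldef by (intro bounded_linear_sub bounded_linear_ident bl)
  have linL: "linear L" using blL bounded_linear.linear by blast
  have LC: "C w = w - L w" for w unfolding Ldef by simp
  have sub: "subspace (Ran (L ^^ m))" for m by (rule Ran_subspace[OF funpow_linear[OF linL]])
  have cl: "closed (Ran (L ^^ m))" for m
  proof (induction m)
    case 0 then show ?case by (simp add: Ran_def)
  next
    case (Suc m)
    have e: "Ran (L ^^ Suc m) = L ` Ran (L ^^ m)" unfolding Ran_def by (simp add: image_comp)
    have "closed (L ` Ran (L ^^ m))"
      using closed_image_L[OF bl cpt Suc.IH sub[of m]] unfolding Ldef[symmetric] .
    then show ?case unfolding e .
  qed
  have "\<forall>m. \<exists>x\<in>Ran (L ^^ m). norm x = 1 \<and> (\<forall>k\<in>Ran (L ^^ Suc m). norm (x - k) > 1/2)"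
  proof
    fix m show "\<exists>x\<in>Ran (L ^^ m). norm x = 1 \<and> (\<forall>k\<in>Ran (L ^^ Suc m). norm (x - k) > 1/2)"
      using riesz[OF sub cl sub Ran_mono[of m "Suc m" L]] ne by auto
  qed
  then obtain x where x: "\<And>m. x m \<in> Ran (L ^^ m)" "\<And>m. norm (x m) = 1"
    "\<And>m k. k \<in> Ran (L ^^ Suc m) \<Longrightarrow> norm (x m - k) > 1/2" by metis
  have "norm (C (x a) - C (x b)) \<ge> 1/2" if ab: "a < b" for a b
  proof -
    define k where "k = L (x a) + x b - L (x b)"
    have LRan: "L y \<in> Ran (L ^^ Suc n)" if "y \<in> Ran (L ^^ n)" for y n
      using that unfolding Ran_def by auto
    have 1: "L (x a) \<in> Ran (L ^^ Suc a)" using LRan x(1) by blast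
    have 2: "x b \<in> Ran (L ^^ Suc a)" using x(1)[of b] Ran_mono[of "Suc a" b L] ab by auto
    have 3: "L (x b) \<in> Ran (L ^^ Suc a)" using LRan[OF x(1)[of b]] Ran_mono[of "Suc a" "Suc b" L] ab
      by auto
    have kK: "k \<in> Ran (L ^^ Suc a)" unfolding k_def using 1 2 3 sub[of "Suc a"]
      by (intro subspace_diff subspace_add) auto
    have "C (x a) - C (x b) = x a - k" unfolding LC k_def by (simp add: algebra_simps)
    then show ?thesis using x(3)[OF kK] by simp
  qed
  then show False using sep_contra[OF cpt x(2)] by blast
qed

lemma riesz_index:
  fixes L :: "'e::real_vector \<Rightarrow> 'e"
  assumes linL: "linear L" and asc: "\<exists>m. Ker (L ^^ m) = Ker (L ^^ Suc m)"
    and desc: "\<exists>m. Ran (L ^^ Suc m) = Ran (L ^^ m)"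
  shows "\<exists>!r::nat.
      (\<forall>m<r. Ker (L ^^ m) \<subset> Ker (L ^^ Suc m)) \<and>
      (\<forall>n\<ge>r. Ker (L ^^ n) = Ker (L ^^ r)) \<and>
      (\<forall>m<r. Ran (L ^^ Suc m) \<subset> Ran (L ^^ m)) \<and>
      (\<forall>n\<ge>r. Ran (L ^^ n) = Ran (L ^^ r))"
proof -
  define p where "p = (LEAST m. Ker (L ^^ m) = Ker (L ^^ Suc m))"
  define q where "q = (LEAST m. Ran (L ^^ Suc m) = Ran (L ^^ m))"
  have hp: "Ker (L ^^ p) = Ker (L ^^ Suc p)" unfolding p_def by (rule LeastI_ex[OF asc])
  have hq: "Ran (L ^^ Suc q) = Ran (L ^^ q)" unfolding q_def by (rule LeastI_ex[OF desc])
  have pmin: "Ker (L ^^ m) \<noteq> Ker (L ^^ Suc m)" if "m < p" for m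
    using not_less_Least that unfolding p_def by blast
  have qmin: "Ran (L ^^ Suc m) \<noteq> Ran (L ^^ m)" if "m < q" for m
    using not_less_Least that unfolding q_def by blast
  have Kst: "Ker (L ^^ n) = Ker (L ^^ p)" if "p \<le> n" for n by (rule Ker_stab[OF linL hp that])
  have Rst: "Ran (L ^^ n) = Ran (L ^^ q)" if "q \<le> n" for n by (rule Ran_stab[OF hq[symmetric] that])
  have linp: "linear (L ^^ n)" for n by (rule funpow_linear[OF linL])
  have Lpow: "L ((L ^^ n) y) = (L ^^ Suc n) y" for n y by simp
  have Lpow2: "(L ^^ n) (L y) = (L ^^ Suc n) y" for n y by (simp add: funpow_swap1)
  have "Ker (L ^^ q) = Ker (L ^^ Suc q)"
  proof
    show "Ker (L ^^ q) \<subseteq> Ker (L ^^ Suc q)" using Ker_mono[OF linL, of q "Suc q"] by simp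
    show "Ker (L ^^ Suc q) \<subseteq> Ker (L ^^ q)"
    proof
      fix x assume x: "x \<in> Ker (L ^^ Suc q)"
      have "(L ^^ q) x \<in> Ran (L ^^ (q + p))" using Rst[of "q + p"] by (simp add: Ran_def)
      then obtain y where y: "(L ^^ q) x = (L ^^ (q + p)) y" unfolding Ran_def by auto
      have "(L ^^ Suc (q + p)) y = L ((L ^^ q) x)" using y by simp
      also have "\<dots> = 0" using x by (simp add: Ker_def)
      finally have "y \<in> Ker (L ^^ Suc (q + p))" by (simp add: Ker_def)
      then have "y \<in> Ker (L ^^ (q + p))" using Kst[of "Suc (q + p)"] Kst[of "q + p"] by simp
      then show "x \<in> Ker (L ^^ q)" using y by (simp add: Ker_def)
    qed
  qed
  then have pq: "p \<le> q" unfolding p_def by (rule Least_le)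
  have "Ran (L ^^ Suc p) = Ran (L ^^ p)"
  proof
    show "Ran (L ^^ Suc p) \<subseteq> Ran (L ^^ p)" by (rule Ran_mono) simp
    show "Ran (L ^^ p) \<subseteq> Ran (L ^^ Suc p)"
    proof
      fix v assume "v \<in> Ran (L ^^ p)"
      then obtain x where v: "v = (L ^^ p) x" unfolding Ran_def by auto
      have "(L ^^ q) x \<in> Ran (L ^^ Suc q)" using hq by (simp add: Ran_def)
      then obtain z where z: "(L ^^ q) x = (L ^^ Suc q) z" unfolding Ran_def by auto
      have "(L ^^ q) (x - L z) = 0" using z by (simp add: linear_diff[OF linp] Lpow2)
      then have "x - L z \<in> Ker (L ^^ q)" by (simp add: Ker_def)
      then have "x - L z \<in> Ker (L ^^ p)" using Kst[OF pq] by simp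
      then have "(L ^^ p) x = (L ^^ p) (L z)" by (simp add: Ker_def linear_diff[OF linp])
      then have "v = (L ^^ Suc p) z" using v by (simp add: Lpow2)
      then show "v \<in> Ran (L ^^ Suc p)" by (simp add: Ran_def)
    qed
  qed
  then have "q \<le> p" unfolding q_def by (rule Least_le)
  with pq have pqe: "p = q" by simp
  show ?thesis
  proof (rule ex1I[of _ p], intro conjI allI impI)
    fix m assume "m < p"
    then have "Ker (L ^^ m) \<noteq> Ker (L ^^ Suc m)" by (rule pmin)
    moreover have "Ker (L ^^ m) \<subseteq> Ker (L ^^ Suc m)" using Ker_mono[OF linL, of m "Suc m"] by simp
    ultimately show "Ker (L ^^ m) \<subset> Ker (L ^^ Suc m)" unfolding psubset_eq by blast
  next
    fix n assume "p \<le> n" then show "Ker (L ^^ n) = Ker (L ^^ p)" by (rule Kst)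
  next
    fix m assume "m < p"
    then have "m < q" using pqe by simp
    then have "Ran (L ^^ Suc m) \<noteq> Ran (L ^^ m)" by (rule qmin)
    moreover have "Ran (L ^^ Suc m) \<subseteq> Ran (L ^^ m)" using Ran_mono[of m "Suc m" L] by simp
    ultimately show "Ran (L ^^ Suc m) \<subset> Ran (L ^^ m)" unfolding psubset_eq by blast
  next
    fix n assume "p \<le> n" then have "q \<le> n" using pqe by simp
    then have "Ran (L ^^ n) = Ran (L ^^ q)" by (rule Rst)
    then show "Ran (L ^^ n) = Ran (L ^^ p)" using pqe by simp
  next
    fix r assume r: "(\<forall>m<r. Ker (L ^^ m) \<subset> Ker (L ^^ Suc m)) \<and>
      (\<forall>n\<ge>r. Ker (L ^^ n) = Ker (L ^^ r)) \<and>
      (\<forall>m<r. Ran (L ^^ Suc m) \<subset> Ran (L ^^ m)) \<and>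
      (\<forall>n\<ge>r. Ran (L ^^ n) = Ran (L ^^ r))"
    show "r = p"
    proof (rule ccontr)
      assume "r \<noteq> p"
      then consider "r < p" | "p < r" by linarith
      then show False
      proof cases
        case 1
        have "Ker (L ^^ Suc r) = Ker (L ^^ r)" using r[THEN conjunct2, THEN conjunct1, rule_format, of "Suc r"] by simp
        then show False using pmin[OF 1] by simp
      next
        case 2
        then have "Ker (L ^^ p) \<subset> Ker (L ^^ Suc p)" using r[THEN conjunct1, rule_format, of p] by simp
        then show False using hp by simp
      qed
    qed
  qed
qed


context
  fixes st :: "'a::{real_normed_algebra_1,banach} \<Rightarrow> 'a" and j :: 'a
    and act :: "'e::banach \<Rightarrow> 'a \<Rightarrow> 'e" and ip :: "'e \<Rightarrow> 'e \<Rightarrow> 'a"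
  assumes H: "hilbert_module st j act ip"
begin

lemma U: "unital_cstar_algebra st j"
  by (rule H[unfolded hilbert_module_def, THEN conjunct1, rule_format])

lemma st_add: "st (a + b) = st a + st b" using U unfolding unital_cstar_algebra_def by blast
lemma st_mult: "st (a * b) = st b * st a" using U unfolding unital_cstar_algebra_def by blast
lemma st_st: "st (st a) = a" using U unfolding unital_cstar_algebra_def by blast
lemma st_cstar: "norm (st a * a) = (norm a)\<^sup>2" using U unfolding unital_cstar_algebra_def by blast
lemma st_scC: "st (scC j c a) = scC j (cnj c) (st a)" using U unfolding unital_cstar_algebra_def by blast

lemma st_scaleR: "st (r *\<^sub>R a) = r *\<^sub>R st a"
proof -
  have "scC j (complex_of_real r) a = r *\<^sub>R a" for a by (simp add: scC_def)
  then show ?thesis using st_scC[of "complex_of_real r" a] by simp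
qed

lemma st_1: "st 1 = 1"
proof -
  have "st 1 = st 1 * st (st 1)" by (metis st_st mult_1_right)
  also have "\<dots> = st (st 1 * 1)" by (rule st_mult[symmetric])
  also have "\<dots> = 1" by (simp add: st_st)
  finally show ?thesis .
qed

lemma st_of_real: "st (of_real r) = of_real r"
  unfolding of_real_def by (simp add: st_scaleR st_1)

lemma norm_st_ge: "norm a \<le> norm (st a)"
proof (cases "a = 0")
  case True then show ?thesis by simp
next
  case False
  have "(norm a)\<^sup>2 \<le> norm (st a) * norm a" using st_cstar[of a] norm_mult_ineq[of "st a" a] by simp
  then show ?thesis using False by (simp add: power2_eq_square)
qed

lemma norm_st: "norm (st a) = norm a"
  using norm_st_ge[of a] norm_st_ge[of "st a"] by (simp add: st_st)

lemma act_add: "act x (a + b) = act x a + act x b"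
  by (rule H[unfolded hilbert_module_def, THEN conjunct2, THEN conjunct1, rule_format])
lemma act_mult: "act x (a * b) = act (act x a) b"
  by (rule H[unfolded hilbert_module_def, THEN conjunct2, THEN conjunct2, THEN conjunct2, THEN conjunct1, rule_format])
lemma scaleR_act: "r *\<^sub>R x = act x (of_real r)"
  by (rule H[unfolded hilbert_module_def, THEN conjunct2, THEN conjunct2, THEN conjunct2, THEN conjunct2, THEN conjunct1, rule_format])
lemma ip_add: "ip x (y + z) = ip x y + ip x z"
  by (rule H[unfolded hilbert_module_def, THEN conjunct2, THEN conjunct2, THEN conjunct2, THEN conjunct2, THEN conjunct2, THEN conjunct1, rule_format])
lemma ip_act: "ip x (act y a) = ip x y * a"
  by (rule H[unfolded hilbert_module_def, THEN conjunct2, THEN conjunct2, THEN conjunct2, THEN conjunct2, THEN conjunct2, THEN conjunct2, THEN conjunct1, rule_format])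
lemma ip_sym: "ip y x = st (ip x y)"
  by (rule H[unfolded hilbert_module_def, THEN conjunct2, THEN conjunct2, THEN conjunct2, THEN conjunct2, THEN conjunct2, THEN conjunct2, THEN conjunct2, THEN conjunct1, rule_format])
lemma ip_def0: "ip x x = 0 \<Longrightarrow> x = 0"
  by (rule H[unfolded hilbert_module_def, THEN conjunct2, THEN conjunct2, THEN conjunct2, THEN conjunct2, THEN conjunct2, THEN conjunct2, THEN conjunct2, THEN conjunct2, THEN conjunct2, THEN conjunct1, rule_format])
lemma norm_ip: "norm x = sqrt (norm (ip x x))"
  by (rule H[unfolded hilbert_module_def, THEN conjunct2, THEN conjunct2, THEN conjunct2, THEN conjunct2, THEN conjunct2, THEN conjunct2, THEN conjunct2, THEN conjunct2, THEN conjunct2, THEN conjunct2, rule_format])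

lemma act_diff: "act x (a - b) = act x a - act x b"
  using act_add[of x "a - b" b] by (simp add: algebra_simps)

lemma ip_add_left: "ip (x + y) v = ip x v + ip y v"
  using ip_sym[of "x + y" v] ip_sym[of x v] ip_sym[of y v] by (simp add: ip_add st_add)

lemma ip_diff_left: "ip (x - y) v = ip x v - ip y v"
  using ip_add_left[of "x - y" y v] by (simp add: algebra_simps)

lemma ip_act_left: "ip (act x a) v = st a * ip x v"
  using ip_sym[of "act x a" v] ip_sym[of x v] by (simp add: ip_act st_mult)

lemma ip_scaleR_left: "ip (r *\<^sub>R x) v = of_real r * ip x v"
  by (simp add: scaleR_act ip_act_left st_of_real)

lemma norm_sq: "(norm x)\<^sup>2 = norm (ip x x)"
  using norm_ip[of x] by simp

lemma norm_act: "norm (act x a) \<le> norm x * norm a"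
proof -
  have "ip (act x a) (act x a) = st a * ip x x * a"
    by (simp add: ip_act ip_act_left mult.assoc)
  then have "norm (ip (act x a) (act x a)) \<le> norm (st a) * norm (ip x x) * norm a"
  proof -
    have a1: "norm (st a * ip x x * a) \<le> norm (st a * ip x x) * norm a" by (rule norm_mult_ineq)
    have a2: "norm (st a * ip x x) * norm a \<le> norm (st a) * norm (ip x x) * norm a"
      by (rule mult_right_mono[OF norm_mult_ineq norm_ge_zero])
    assume "ip (act x a) (act x a) = st a * ip x x * a"
    then show ?thesis using order_trans[OF a1 a2] by simp
  qed
  then have "(norm (act x a))\<^sup>2 \<le> (norm x * norm a)\<^sup>2"
    by (simp add: norm_sq[symmetric] norm_st power_mult_distrib power2_eq_square algebra_simps)
  then show ?thesis by (rule power2_le_imp_le) simp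
qed

lemma ip_zero_all: "(\<And>w. ip d w = 0) \<Longrightarrow> d = 0"
  using ip_def0 by blast

lemma adj_linear:
  assumes "adjointable ip C" shows "linear C"
proof -
  obtain S where S: "\<And>x y. ip (C x) y = ip x (S y)" using assms unfolding adjointable_def by blast
  show ?thesis
  proof (rule linearI)
    fix x y
    have "C (x + y) - C x - C y = 0"
      by (rule ip_zero_all) (simp add: ip_diff_left S ip_add_left)
    then show "C (x + y) = C x + C y" by (metis diff_diff_eq eq_iff_diff_eq_0)
  next
    fix r and x :: 'e
    have "C (r *\<^sub>R x) - r *\<^sub>R C x = 0"
      by (rule ip_zero_all) (simp add: ip_diff_left S ip_scaleR_left)
    then show "C (r *\<^sub>R x) = r *\<^sub>R C x" by (metis eq_iff_diff_eq_0)
  qed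
qed

lemma act_tendsto:
  assumes "g \<longlonglongrightarrow> g0"
  shows "(\<lambda>k. act x (g k)) \<longlonglongrightarrow> act x g0"
proof -
  have "(\<lambda>k. g k - g0) \<longlonglongrightarrow> 0" using assms by (rule LIM_zero)
  then have "(\<lambda>k. norm (g k - g0)) \<longlonglongrightarrow> 0" by (rule tendsto_norm_zero)
  then have t: "(\<lambda>k. norm x * norm (g k - g0)) \<longlonglongrightarrow> 0" by (rule tendsto_mult_right_zero)
  have "(\<lambda>k. act x (g k) - act x g0) \<longlonglongrightarrow> 0"
  proof (rule Lim_null_comparison[OF _ t])
    show "\<forall>\<^sub>F k in sequentially. norm (act x (g k) - act x g0) \<le> norm x * norm (g k - g0)"
      by (intro always_eventually allI) (unfold act_diff[symmetric], rule norm_act)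
  qed
  then show ?thesis by (rule LIM_zero_cancel)
qed

lemma tri3: "norm (a + b - c) \<le> norm a + norm b + norm (c::'e)"
  using norm_triangle_ineq4[of "a + b" c] norm_triangle_ineq[of a b] by linarith

lemma C_cpt:
  assumes PH: "property_H ip" and CO: "compact_op j act ip C"
  shows "cpt C"
  unfolding cpt_def
proof (intro allI impI)
  fix \<zeta> :: "nat \<Rightarrow> 'e" and B :: real
  assume bd: "\<forall>n. norm (\<zeta> n) \<le> B"
  then obtain h \<zeta>0 where h: "strict_mono h" "\<And>v. (\<lambda>k. ip v (\<zeta> (h k))) \<longlonglongrightarrow> ip v \<zeta>0"
    using PH unfolding property_H_def by blast
  have "Cauchy (\<lambda>k. C (\<zeta> (h k)))"
    unfolding Cauchy_iff
  proof (intro allI impI)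
    fix e :: real assume e: "e > 0"
    define B' where "B' = \<bar>B\<bar> + 1"
    have B'pos: "B' > 0" unfolding B'_def by simp
    have bd': "norm (\<zeta> n) \<le> B'" for n using bd[rule_format, of n] unfolding B'_def by linarith
    define \<epsilon> where "\<epsilon> = e / (4 * B')"
    have \<epsilon>pos: "\<epsilon> > 0" unfolding \<epsilon>_def using e B'pos by simp
    have Fall: "\<forall>\<epsilon>>0. \<exists>n (c::nat \<Rightarrow> complex) (xs::nat \<Rightarrow> 'e) ys.
        \<forall>z. norm (C z - (\<Sum>i<n. act (theta act ip (xs i) (ys i) z) (scC j (c i) 1))) \<le> \<epsilon> * norm z"
      using CO unfolding compact_op_def by (rule conjunct2)
    obtain n :: nat and c xs ys where F: "\<And>z. norm (C z - (\<Sum>i<n. act (theta act ip (xs i) (ys i) z) (scC j (c i) 1))) \<le> \<epsilon> * norm z"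
      using Fall[rule_format, OF \<epsilon>pos] by blast
    define F where "F z = (\<Sum>i<n. act (theta act ip (xs i) (ys i) z) (scC j (c i) 1))" for z
    have Fk: "(\<lambda>k. F (\<zeta> (h k))) \<longlonglongrightarrow> (\<Sum>i<n. act (xs i) (ip (ys i) \<zeta>0 * scC j (c i) 1))"
      unfolding F_def theta_def act_mult[symmetric]
      by (intro tendsto_sum act_tendsto tendsto_mult_right h(2))
    obtain M where M: "\<forall>m\<ge>M. \<forall>k\<ge>M. norm (F (\<zeta> (h m)) - F (\<zeta> (h k))) < e / 2"
      using CauchyD[OF LIMSEQ_imp_Cauchy[OF Fk], of "e/2"] e by auto
    have CF: "norm (C (\<zeta> m) - F (\<zeta> m)) \<le> e / 4" for m
    proof -
      have "norm (C (\<zeta> m) - F (\<zeta> m)) \<le> \<epsilon> * norm (\<zeta> m)" using F unfolding F_def by blast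
      also have "\<dots> \<le> \<epsilon> * B'" using bd' \<epsilon>pos by (intro mult_left_mono) auto
      also have "\<dots> = e / 4" unfolding \<epsilon>_def using B'pos by simp
      finally show ?thesis .
    qed
    show "\<exists>M. \<forall>m\<ge>M. \<forall>k\<ge>M. norm (C (\<zeta> (h m)) - C (\<zeta> (h k))) < e"
    proof (intro exI allI impI)
      fix m k assume mk: "M \<le> m" "M \<le> k"
      have eq: "C (\<zeta> (h m)) - C (\<zeta> (h k)) = (C (\<zeta> (h m)) - F (\<zeta> (h m))) + (F (\<zeta> (h m)) - F (\<zeta> (h k)))
          - (C (\<zeta> (h k)) - F (\<zeta> (h k)))" by simp
      have "norm (C (\<zeta> (h m)) - C (\<zeta> (h k))) \<le> norm (C (\<zeta> (h m)) - F (\<zeta> (h m)))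
          + norm (F (\<zeta> (h m)) - F (\<zeta> (h k))) + norm (C (\<zeta> (h k)) - F (\<zeta> (h k)))"
        unfolding eq by (rule tri3)
      then show "norm (C (\<zeta> (h m)) - C (\<zeta> (h k))) < e"
        using CF[of "h m"] CF[of "h k"] M[rule_format, OF mk(1) mk(2)] by linarith
    qed
  qed
  then show "\<exists>h. strict_mono h \<and> Cauchy (\<lambda>n. C (\<zeta> (h n)))" using h(1) by blast
qed

end

theorem theorem3p6:
  fixes st :: "'a::{real_normed_algebra_1,banach} \<Rightarrow> 'a" and j :: 'a
    and act :: "'e::banach \<Rightarrow> 'a \<Rightarrow> 'e" and ip :: "'e \<Rightarrow> 'e \<Rightarrow> 'a"
    and C L :: "'e \<Rightarrow> 'e"
  assumes "hilbert_module st j act ip"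
    and "property_H ip"
    and "compact_op j act ip C"
    and "L = (\<lambda>z. z - C z)"
  shows "\<exists>!r::nat.
      (\<forall>m<r. Ker (L ^^ m) \<subset> Ker (L ^^ Suc m)) \<and>
      (\<forall>n\<ge>r. Ker (L ^^ n) = Ker (L ^^ r)) \<and>
      (\<forall>m<r. Ran (L ^^ Suc m) \<subset> Ran (L ^^ m)) \<and>
      (\<forall>n\<ge>r. Ran (L ^^ n) = Ran (L ^^ r))"
proof -
  have adj: "adjointable ip C" using assms(3) unfolding compact_op_def by blast
  have lin: "linear C" by (rule adj_linear[OF assms(1) adj])
  have cp: "cpt C" by (rule C_cpt[OF assms(1) assms(2) assms(3)])
  have bl: "bounded_linear C" by (rule cpt_bounded[OF lin cp])
  have "bounded_linear L" unfolding assms(4) by (intro bounded_linear_sub bounded_linear_ident bl)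
  then have linL: "linear L" using bounded_linear.linear by blast
  show ?thesis
    by (rule riesz_index[OF linL ascent[OF lin cp assms(4)] descent[OF lin cp assms(4)]])
qed

end
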